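(* Let $\alpha>0$ and let $D_\alpha(t)=(1+t^{-\alpha})^{-1}$ for $t>0$, $D_\alpha(0)=0$. A distribution function $F\in\Delta_+$ is in the Boolean max-domain of attraction of $D_\alpha$ if and only if $1-F$ is regularly varying of index $-\alpha$.
   Context: $\Delta_+$ is the set of functions $F:[0,\infty)\to[0,1]$ that are nondecreasing, right continuous and satisfy $\lim_{t\to\infty}F(t)=1$. Define $\sqcap$ on $[0,1]$ by $(x\sqcap y)^{-1}-1=(x^{-1}-1)+(y^{-1}-1)$ (conventions $0^{-1}=+\infty$, $(+\infty)^{-1}=0$), and the Boolean max-convolution of $F,G\in\Delta_+$ by $(F\boxed{\vee}G)(t)=F(t)\sqcap G(t)$; $G^{\boxed{\vee}n}$ denotes the $n$-fold Boolean max-convolution of $G$ with itself. $G\in\Delta_+$ is in the Boolean max-domain of attraction of $H\in\Delta_+$ if there exist $a_n>0$ ($n\in\mathbb{N}$) with $G^{\boxed{\vee}n}(a_nt)\to H(t)$ as $n\to\infty$ for all $t\ge0$. A function $h$ on $[0,\infty)$ is regularly varying of index $-\alpha$ if $\lim_{t\to+\infty}h(tx)/h(t)=x^{-\alpha}$ for all $x>0$. *)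

theory Defs
  imports "HOL-Analysis.Analysis"
begin

text \<open>Distribution functions on [0,\<infinity>): only values at t \<ge> 0 matter.\<close>
definition Delta_plus :: "(real \<Rightarrow> real) set" where
  "Delta_plus = {F. (\<forall>t\<ge>0. 0 \<le> F t \<and> F t \<le> 1)
                  \<and> mono_on {0..} F
                  \<and> (\<forall>t\<ge>0. continuous (at_right t) F)
                  \<and> (F \<longlongrightarrow> 1) at_top}"

text \<open>The operation x \<sqinter> y on [0,1]: (x\<sqinter>y)^{-1} - 1 = (x^{-1}-1) + (y^{-1}-1),
  with 0^{-1} = +\<infinity> and (+\<infinity>)^{-1} = 0.\<close>
definition bool_meet :: "real \<Rightarrow> real \<Rightarrow> real" where
  "bool_meet x y = (if x = 0 \<or> y = 0 then 0 else 1 / (1 / x + 1 / y - 1))"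

definition bool_maxconv :: "(real \<Rightarrow> real) \<Rightarrow> (real \<Rightarrow> real) \<Rightarrow> (real \<Rightarrow> real)" where
  "bool_maxconv F G = (\<lambda>t. bool_meet (F t) (G t))"

text \<open>n-fold Boolean max-convolution; the 0-fold power is the neutral element 1
  (only n \<ge> 1 matter for limits).\<close>
fun bool_maxpow :: "(real \<Rightarrow> real) \<Rightarrow> nat \<Rightarrow> (real \<Rightarrow> real)" where
  "bool_maxpow G 0 = (\<lambda>t. 1)"
| "bool_maxpow G (Suc n) = bool_maxconv G (bool_maxpow G n)"

definition bool_max_domain_of_attraction :: "(real \<Rightarrow> real) \<Rightarrow> (real \<Rightarrow> real) \<Rightarrow> bool" where
  "bool_max_domain_of_attraction G H \<longleftrightarrow>
     (\<exists>a :: nat \<Rightarrow> real. (\<forall>n. a n > 0) \<and>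
        (\<forall>t\<ge>0. (\<lambda>n. bool_maxpow G n (a n * t)) \<longlonglongrightarrow> H t))"

definition regularly_varying :: "real \<Rightarrow> (real \<Rightarrow> real) \<Rightarrow> bool" where
  "regularly_varying \<rho> h \<longleftrightarrow>
     (\<forall>x>0. ((\<lambda>t. h (t * x) / h t) \<longlongrightarrow> x powr \<rho>) at_top)"

definition D_alpha :: "real \<Rightarrow> real \<Rightarrow> real" where
  "D_alpha \<alpha> t = (if t > 0 then 1 / (1 + t powr (- \<alpha>)) else 0)"

end

theory Submission
  imports Defs
begin


lemma pow_formula:
  assumes "n \<ge> 1" "0 \<le> F s" "F s \<le> 1"
  shows "bool_maxpow F n s = F s / (F s + real n * (1 - F s))"
  using assms(1)
proof (induction n rule: dec_induct)
  case base
  then show ?case using assms by (simp add: bool_maxconv_def bool_meet_def)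
next
  case (step m)
  have d: "F s + real m * (1 - F s) \<ge> 1" using step.hyps assms
    by (smt (verit, ccfv_SIG) mult_le_cancel_right1 of_nat_1 of_nat_mono)
  show ?case
  proof (cases "F s = 0")
    case True then show ?thesis by (simp add: bool_maxconv_def bool_meet_def)
  next
    case False
    hence pos: "F s > 0" using assms by auto
    have "bool_maxpow F (Suc m) s = 1 / (1 / F s + 1 / (F s / (F s + real m * (1 - F s))) - 1)"
      using step.IH False d by (simp add: bool_maxconv_def bool_meet_def)
    also have "\<dots> = F s / (F s + real (Suc m) * (1 - F s))"
      using pos d by (simp add: field_simps)
    finally show ?thesis .
  qed
qed



lemma exists_q:
  fixes L e \<alpha> :: real
  assumes "L > 0" "e > 0" "\<alpha> > 0"
  shows "\<exists>q>1. L * q powr \<alpha> < L + e \<and> L * q powr (-\<alpha>) > L - e"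
proof -
  have c1: "((\<lambda>q. L * q powr \<alpha>) \<longlongrightarrow> L * 1 powr \<alpha>) (at_right 1)"
    by (intro tendsto_intros) auto
  have c2: "((\<lambda>q. L * q powr (-\<alpha>)) \<longlongrightarrow> L * 1 powr (-\<alpha>)) (at_right 1)"
    by (intro tendsto_intros) auto
  have "eventually (\<lambda>q. L * q powr \<alpha> < L + e) (at_right (1::real))"
    using order_tendstoD(2)[OF c1] assms by simp
  moreover have "eventually (\<lambda>q. L * q powr (-\<alpha>) > L - e) (at_right (1::real))"
    using order_tendstoD(1)[OF c2] assms by simp
  ultimately have "eventually (\<lambda>q. L * q powr \<alpha> < L + e \<and> L * q powr (-\<alpha>) > L - e) (at_right (1::real))"
    by eventually_elim auto
  then obtain b where b: "b > 1" "\<forall>y>1. y < b \<longrightarrow> L * y powr \<alpha> < L + e \<and> L * y powr (-\<alpha>) > L - e"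
    by (subst (asm) eventually_at_right[of 1 2]) auto
  then show ?thesis using b by (intro exI[of _ "(1+b)/2"]) auto
qed

lemma filterlim_mult_const_top:
  fixes a :: "nat \<Rightarrow> real"
  assumes "filterlim a at_top sequentially" "c > 0"
  shows "filterlim (\<lambda>n. a n * c) at_top sequentially"
  using filterlim_tendsto_pos_mult_at_top[OF tendsto_const[of c] assms(2) assms(1)]
  by (simp add: mult.commute)

lemma RV_from_seq:
  fixes g :: "real \<Rightarrow> real" and a :: "nat \<Rightarrow> real"
  assumes anti: "\<And>s t. 0 \<le> s \<Longrightarrow> s \<le> t \<Longrightarrow> g t \<le> g s"
    and gpos: "\<And>s. s \<ge> 0 \<Longrightarrow> g s > 0"
    and g0: "(g \<longlongrightarrow> 0) at_top"
    and apos: "\<And>n. a n > 0"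
    and atop: "filterlim a at_top sequentially"
    and lim: "\<And>t. t > 0 \<Longrightarrow> ((\<lambda>n. real n * g (a n * t)) \<longlongrightarrow> t powr (-\<alpha>)) sequentially"
    and al: "\<alpha> > 0"
    and x: "x > 0"
  shows "((\<lambda>s. g (s * x) / g s) \<longlongrightarrow> x powr (-\<alpha>)) at_top"
proof (rule tendstoI)
  fix e :: real assume e: "e > 0"
  define L where "L = x powr (-\<alpha>)"
  have L: "L > 0" using x by (simp add: L_def)
  obtain q where q: "q > 1" "L * q powr \<alpha> < L + e" "L * q powr (-\<alpha>) > L - e"
    using exists_q[OF L e al] by auto
  have gcomp: "((\<lambda>n. g (a n * c)) \<longlongrightarrow> 0) sequentially" if "c > 0" for c
    using filterlim_compose[OF g0 filterlim_mult_const_top[OF atop that]] .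
  have E1: "eventually (\<lambda>n. real n * g (a n * q) < 1) sequentially"
  proof -
    have "q powr (-\<alpha>) < 1 powr (-\<alpha>)" using q al by (intro powr_less_mono2_neg) auto
    hence "q powr (-\<alpha>) < 1" by simp
    then show ?thesis using order_tendstoD(2)[OF lim[of q]] q by auto
  qed
  have E2: "eventually (\<lambda>n. (real n - 1) * g (a n * (1/q)) > 1) sequentially"
  proof -
    have "((\<lambda>n. real n * g (a n * (1/q)) - g (a n * (1/q))) \<longlongrightarrow> (1/q) powr (-\<alpha>) - 0) sequentially"
      using q by (intro tendsto_diff lim gcomp) auto
    moreover have "(1/q) powr (-\<alpha>) > 1"
    proof -
      have "1 powr \<alpha> < q powr \<alpha>" using q al by (intro powr_less_mono2) auto
      moreover have "(1/q) powr (-\<alpha>) = q powr \<alpha>" using q by (simp add: powr_minus_divide powr_divide)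
      ultimately show ?thesis by simp
    qed
    ultimately show ?thesis using order_tendstoD(1) by (fastforce simp: algebra_simps)
  qed
  have E3: "eventually (\<lambda>n. real n * g (a n * (x/q)) < L + e) sequentially"
  proof -
    have "(x/q) powr (-\<alpha>) = L * q powr \<alpha>" using x q
      by (simp add: L_def powr_divide powr_minus field_simps)
    then show ?thesis using order_tendstoD(2)[OF lim[of "x/q"]] q x by auto
  qed
  have E4: "eventually (\<lambda>n. (real n - 1) * g (a n * (x*q)) > L - e) sequentially"
  proof -
    have "((\<lambda>n. real n * g (a n * (x*q)) - g (a n * (x*q))) \<longlongrightarrow> (x*q) powr (-\<alpha>) - 0) sequentially"
      using q x by (intro tendsto_diff lim gcomp) auto
    moreover have "(x*q) powr (-\<alpha>) = L * q powr (-\<alpha>)" using x q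
      by (simp add: L_def powr_mult)
    ultimately show ?thesis using order_tendstoD(1) q by (fastforce simp: algebra_simps)
  qed
  define N where "N = (\<lambda>s. nat \<lfloor>1 / g s\<rfloor> + 1)"
  have Ntop: "filterlim N at_top at_top"
  proof -
    have "filterlim (\<lambda>s. inverse (g s)) at_top at_top"
      by (rule filterlim_inverse_at_top[OF g0])
        (auto intro!: eventually_at_top_linorderI[of 0] gpos)
    then have inv: "filterlim (\<lambda>s. 1 / g s) at_top at_top" by (simp add: inverse_eq_divide)
    show ?thesis unfolding filterlim_at_top
    proof
      fix Z :: nat
      have "eventually (\<lambda>s. real Z \<le> 1 / g s) at_top"
        using inv by (simp add: filterlim_at_top)
      then show "eventually (\<lambda>s. Z \<le> N s) at_top"
        by eventually_elim (simp add: N_def le_SucI le_nat_floor)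
    qed
  qed
  have EV: "eventually (\<lambda>n. real n * g (a n * q) < 1 \<and> (real n - 1) * g (a n * (1/q)) > 1 \<and>
      real n * g (a n * (x/q)) < L + e \<and> (real n - 1) * g (a n * (x*q)) > L - e) sequentially"
    using E1 E2 E3 E4 by eventually_elim auto
  have EVs: "eventually (\<lambda>s. real (N s) * g (a (N s) * q) < 1 \<and> (real (N s) - 1) * g (a (N s) * (1/q)) > 1 \<and>
      real (N s) * g (a (N s) * (x/q)) < L + e \<and> (real (N s) - 1) * g (a (N s) * (x*q)) > L - e) at_top"
    using filterlim_iff[THEN iffD1, OF Ntop, rule_format, OF EV] .
  show "eventually (\<lambda>s. dist (g (s * x) / g s) (x powr (-\<alpha>)) < e) at_top"
    using EVs eventually_gt_at_top[of 0]
  proof eventually_elim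
    case (elim s)
    define n where "n = N s"
    define G where "G = g s"
    have G: "G > 0" using gpos elim by (simp add: G_def)
    have rn: "real n = real_of_int \<lfloor>1/G\<rfloor> + 1" using G by (simp add: n_def N_def G_def)
    have n1: "real n * G > 1"
    proof -
      have "1/G < real n" using rn by linarith
      then show ?thesis using G by (simp add: field_simps)
    qed
    have n2: "(real n - 1) * G \<le> 1"
    proof -
      have "real n - 1 \<le> 1/G" using rn by linarith
      then show ?thesis using G by (simp add: field_simps)
    qed
    have nge: "real n \<ge> 1" using rn G by simp
    have an: "a n > 0" by (rule apos)
    have A1: "real n * g (a n * q) < 1" and A2: "(real n - 1) * g (a n * (1/q)) > 1"
      and A3: "real n * g (a n * (x/q)) < L + e" and A4: "(real n - 1) * g (a n * (x*q)) > L - e"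
      using elim by (auto simp: n_def)
    have s1: "s < a n * q"
    proof (rule ccontr)
      assume "\<not> s < a n * q"
      then have "G \<le> g (a n * q)" using anti[of "a n * q" s] an q by (simp add: G_def)
      then have "real n * G \<le> real n * g (a n * q)" using nge by (simp add: mult_left_mono)
      then show False using A1 n1 by linarith
    qed
    have s2: "s > a n * (1/q)"
    proof (rule ccontr)
      assume "\<not> s > a n * (1/q)"
      then have "G \<ge> g (a n * (1/q))" using anti[of s "a n * (1/q)"] elim by (simp add: G_def)
      then have "(real n - 1) * G \<ge> (real n - 1) * g (a n * (1/q))" using nge by (simp add: mult_left_mono)
      then show False using A2 n2 by linarith
    qed
    have u: "g (s * x) \<le> g (a n * (x/q))"
    proof -
      have "a n * (x/q) \<le> s * x" using s2 x q by (simp add: field_simps)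
      then show ?thesis using anti an x q by simp
    qed
    have l: "g (s * x) \<ge> g (a n * (x*q))"
    proof -
      have "s * x \<le> a n * (x*q)" using s1 x by (simp add: field_simps)
      then show ?thesis using anti elim x by simp
    qed
    have gnn: "g (a n * (x/q)) \<ge> 0" "g (a n * (x*q)) \<ge> 0"
      using gpos[of "a n * (x/q)"] gpos[of "a n * (x*q)"] an x q by auto
    have up: "g (s * x) / G < L + e"
    proof -
      have "g (s * x) / G \<le> g (a n * (x/q)) / G" using u G by (simp add: divide_right_mono)
      also have "\<dots> \<le> real n * g (a n * (x/q))"
      proof -
        have "g (a n * (x/q)) \<le> (real n * G) * g (a n * (x/q))"
          using mult_right_mono[of 1 "real n * G" "g (a n * (x/q))"] n1 gnn(1) by simp
        then show ?thesis using G by (simp add: pos_divide_le_eq algebra_simps)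
      qed
      finally show ?thesis using A3 by linarith
    qed
    have lo: "g (s * x) / G > L - e"
    proof -
      have "(real n - 1) * g (a n * (x*q)) \<le> g (a n * (x*q)) / G"
      proof -
        have "((real n - 1) * G) * g (a n * (x*q)) \<le> g (a n * (x*q))"
          using mult_right_mono[of "(real n - 1) * G" 1 "g (a n * (x*q))"] n2 gnn(2) by simp
        then show ?thesis using G by (subst pos_le_divide_eq) (auto simp: mult_ac)
      qed
      also have "\<dots> \<le> g (s * x) / G" using l G by (simp add: divide_right_mono)
      finally show ?thesis using A4 by linarith
    qed
    show ?case using up lo by (simp add: dist_real_def L_def G_def abs_less_iff)
  qed
qed



lemma seq_W:
  fixes f w :: "nat \<Rightarrow> real" and L :: real
  assumes L: "L > 0"
    and f01: "\<And>n. 0 \<le> f n \<and> f n \<le> 1"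
    and wdef: "\<And>n. w n = real n * (1 - f n)"
    and lim: "(\<lambda>n. f n / (f n + w n)) \<longlonglongrightarrow> 1 / (1 + L)"
  shows "w \<longlonglongrightarrow> L"
proof -
  have wnn: "w n \<ge> 0" for n using f01[of n] wdef[of n] by simp
  have d: "1 / (1 + L) > 0" using L by simp
  have ev1: "eventually (\<lambda>n. f n / (f n + w n) > 0) sequentially"
    using order_tendstoD(1)[OF lim d] .
  have evf: "eventually (\<lambda>n. f n > 0) sequentially"
    using ev1 by eventually_elim (metis div_0 f01 less_eq_real_def order_less_irrefl)
  have eq: "eventually (\<lambda>n. 1 / (f n / (f n + w n)) - 1 = w n / f n) sequentially"
    using evf proof eventually_elim
    case (elim n) then show ?case using wnn[of n] by (simp add: field_simps)
  qed
  have "(\<lambda>n. 1 / (f n / (f n + w n)) - 1) \<longlonglongrightarrow> 1 / (1 / (1 + L)) - 1"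
    using d by (intro tendsto_intros lim) auto
  then have "(\<lambda>n. 1 / (f n / (f n + w n)) - 1) \<longlonglongrightarrow> L" using L by simp
  then have wf: "(\<lambda>n. w n / f n) \<longlonglongrightarrow> L" using eq by (rule Lim_transform_eventually)
  have evb: "eventually (\<lambda>n. w n / f n < L + 1) sequentially"
    using order_tendstoD(2)[OF wf] by simp
  have ub: "eventually (\<lambda>n. 1 - f n \<le> (L + 1) / real n) sequentially"
    using evb evf eventually_gt_at_top[of 0]
  proof eventually_elim
    case (elim n)
    have "w n \<le> w n / f n" using elim f01[of n] wnn[of n]
      by (simp add: le_divide_eq) (metis mult_left_le)
    then have "w n < L + 1" using elim by linarith
    then have "real n * (1 - f n) \<le> L + 1" using wdef[of n] by simp
    then show ?case using elim by (simp add: field_simps)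
  qed
  have g0: "(\<lambda>n. 1 - f n) \<longlonglongrightarrow> 0"
    by (rule tendsto_sandwich[OF _ ub tendsto_const lim_const_over_n]) (use f01 in auto)
  have f1: "f \<longlonglongrightarrow> 1"
  proof -
    have "(\<lambda>n. 1 - (1 - f n)) \<longlonglongrightarrow> 1 - 0" by (intro tendsto_intros g0)
    then show ?thesis by simp
  qed
  have "(\<lambda>n. (w n / f n) * f n) \<longlonglongrightarrow> L * 1" by (intro tendsto_intros wf f1)
  moreover have "eventually (\<lambda>n. (w n / f n) * f n = w n) sequentially"
    using evf by eventually_elim simp
  ultimately show ?thesis using Lim_transform_eventually by fastforce
qed

lemma construct_a:
  fixes g :: "real \<Rightarrow> real" and \<alpha> :: real
  assumes anti: "\<And>s t. 0 \<le> s \<Longrightarrow> s \<le> t \<Longrightarrow> g t \<le> g s"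
    and gpos: "\<And>s. s \<ge> 0 \<Longrightarrow> g s > 0"
    and g0: "(g \<longlongrightarrow> 0) at_top"
    and rc: "\<And>t. t \<ge> 0 \<Longrightarrow> (g \<longlongrightarrow> g t) (at_right t)"
    and RV: "\<And>x. x > 0 \<Longrightarrow> ((\<lambda>s. g (s * x) / g s) \<longlongrightarrow> x powr (-\<alpha>)) at_top"
    and al: "\<alpha> > 0"
  shows "\<exists>a. (\<forall>n. a n > 0) \<and> filterlim a at_top sequentially \<and>
             (\<forall>t>0. (\<lambda>n. real n * g (a n * t)) \<longlonglongrightarrow> t powr (-\<alpha>))"
proof -
  define S where "S n = {s. 1 \<le> s \<and> real n * g s \<le> 1}" for n
  define a where "a n = Inf (S n)" for n
  have ne: "S n \<noteq> {}" for n
  proof -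
    have "eventually (\<lambda>s. g s < 1 / (real n + 1)) at_top"
      using order_tendstoD(2)[OF g0, of "1 / (real n + 1)"] by simp
    then obtain N where N: "\<And>s. s \<ge> N \<Longrightarrow> g s < 1 / (real n + 1)"
      by (auto simp: eventually_at_top_linorder)
    define s where "s = max N 1"
    have "g s < 1 / (real n + 1)" using N by (simp add: s_def)
    then have "(real n + 1) * g s < 1" by (simp add: field_simps)
    moreover have "g s \<ge> 0" using gpos[of s] by (force simp: s_def le_max_iff_disj)
    ultimately have "real n * g s \<le> 1" by (smt (verit) mult_right_mono)
    then show ?thesis by (auto simp: S_def s_def intro!: exI[of _ s])
  qed
  have bdd: "bdd_below (S n)" for n by (auto simp: S_def bdd_below_def)
  have a1: "a n \<ge> 1" for n unfolding a_def by (rule cInf_greatest[OF ne]) (auto simp: S_def)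
  have apos: "a n > 0" for n using a1[of n] by simp
  have B: "real n * g (a n) \<le> 1" for n
  proof (rule tendsto_upperbound[OF _ _ trivial_limit_at_right_real])
    show "((\<lambda>y. real n * g y) \<longlongrightarrow> real n * g (a n)) (at_right (a n))"
      using rc[of "a n"] apos[of n] by (intro tendsto_intros) auto
    show "eventually (\<lambda>y. real n * g y \<le> 1) (at_right (a n))"
      using eventually_at_right_less[of "a n"]
    proof eventually_elim
      case (elim y)
      then obtain s where s: "s \<in> S n" "s < y" using cInf_less_iff[OF ne bdd] by (auto simp: a_def)
      then have "g y \<le> g s" using anti[of s y] by (auto simp: S_def)
      then show ?case using s by (auto simp: S_def intro: order_trans[OF mult_left_mono])
    qed
  qed
  have C: "real n * g s > 1" if "1 \<le> s" "s < a n" for n s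
  proof (rule ccontr)
    assume "\<not> real n * g s > 1"
    then have "s \<in> S n" using that by (auto simp: S_def)
    then have "a n \<le> s" unfolding a_def by (rule cInf_lower[OF _ bdd])
    then show False using that by simp
  qed
  have atop: "filterlim a at_top sequentially"
    unfolding filterlim_at_top
  proof
    fix Z :: real
    define M where "M = max Z 1"
    have gM: "g M > 0" using gpos by (simp add: M_def)
    have "eventually (\<lambda>n. real n > 1 / g M) sequentially"
      by (rule eventually_sequentiallyI[of "nat \<lceil>1 / g M\<rceil> + 1"]) linarith
    then show "eventually (\<lambda>n. Z \<le> a n) sequentially"
    proof eventually_elim
      case (elim n)
      have nM: "real n * g M > 1" using elim gM by (simp add: field_simps)
      have "M \<le> a n" unfolding a_def
      proof (rule cInf_greatest[OF ne])
        fix s assume "s \<in> S n"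
        then have s: "1 \<le> s" "real n * g s \<le> 1" by (auto simp: S_def)
        show "M \<le> s"
        proof (rule ccontr)
          assume "\<not> M \<le> s"
          then have "g M \<le> g s" using anti[of s M] s by simp
          then have "real n * g M \<le> real n * g s" by (simp add: mult_left_mono)
          then show False using s nM by linarith
        qed
      qed
      then show ?case by (simp add: M_def)
    qed
  qed
  have E: "(\<lambda>n. real n * g (a n)) \<longlonglongrightarrow> 1"
  proof (rule tendstoI)
    fix e :: real assume e: "e > 0"
    obtain q where q: "q > 1" "1 * q powr (-\<alpha>) > 1 - e"
      using exists_q[of 1 e \<alpha>] e al by auto
    have aq: "filterlim (\<lambda>n. a n * (1/q)) at_top sequentially"
      using filterlim_mult_const_top[OF atop, of "1/q"] q by simp
    have "((\<lambda>n. g (a n * (1/q) * q) / g (a n * (1/q))) \<longlongrightarrow> q powr (-\<alpha>)) sequentially"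
      using filterlim_compose[OF RV[of q] aq] q by simp
    then have r: "((\<lambda>n. g (a n) / g (a n * (1/q))) \<longlongrightarrow> q powr (-\<alpha>)) sequentially"
      using q by simp
    have ev1: "eventually (\<lambda>n. g (a n) / g (a n * (1/q)) > 1 - e) sequentially"
      using order_tendstoD(1)[OF r] q by simp
    have ev2: "eventually (\<lambda>n. a n * (1/q) \<ge> 1) sequentially"
      using aq by (simp add: filterlim_at_top)
    show "eventually (\<lambda>n. dist (real n * g (a n)) 1 < e) sequentially"
      using ev1 ev2
    proof eventually_elim
      case (elim n)
      have lt: "a n * (1/q) < a n" using apos[of n] q by (simp add: field_simps)
      have c: "real n * g (a n * (1/q)) > 1" by (rule C[OF elim(2) lt])
      have gq: "g (a n * (1/q)) > 0" using gpos elim(2) by simp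
      have ga: "g (a n) > 0" using gpos apos[of n] by (simp add: less_imp_le)
      have eqn: "real n * g (a n) = (real n * g (a n * (1/q))) * (g (a n) / g (a n * (1/q)))"
        using gq by simp
      have "g (a n) / g (a n * (1/q)) \<le> (real n * g (a n * (1/q))) * (g (a n) / g (a n * (1/q)))"
        using c ga gq by (intro mult_le_cancel_right1[THEN iffD2]) (auto simp: divide_pos_pos less_imp_le not_less)
      then have "real n * g (a n) > 1 - e" using eqn elim(1) by linarith
      then show ?case using B[of n] e by (simp add: dist_real_def abs_if)
    qed
  qed
  have F: "(\<lambda>n. real n * g (a n * t)) \<longlonglongrightarrow> t powr (-\<alpha>)" if t: "t > 0" for t
  proof -
    have "((\<lambda>n. g (a n * t) / g (a n)) \<longlongrightarrow> t powr (-\<alpha>)) sequentially"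
      using filterlim_compose[OF RV[OF t] atop] .
    then have "(\<lambda>n. real n * g (a n) * (g (a n * t) / g (a n))) \<longlonglongrightarrow> 1 * t powr (-\<alpha>)"
      by (intro tendsto_intros E)
    moreover have "real n * g (a n) * (g (a n * t) / g (a n)) = real n * g (a n * t)" for n
      using gpos[of "a n"] apos[of n] by simp
    ultimately show ?thesis by simp
  qed
  show ?thesis using apos atop F by blast
qed



theorem corollary4p3:
  fixes \<alpha> :: real and F :: "real \<Rightarrow> real"
  assumes "\<alpha> > 0" and "F \<in> Delta_plus"
  shows "bool_max_domain_of_attraction F (D_alpha \<alpha>) \<longleftrightarrow>
         regularly_varying (- \<alpha>) (\<lambda>t. 1 - F t)"
proof -
  note al = assms(1)
  define g where "g = (\<lambda>t. 1 - F t)"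
  have F01: "\<And>t. t \<ge> 0 \<Longrightarrow> 0 \<le> F t \<and> F t \<le> 1" using assms(2) by (simp add: Delta_plus_def)
  have mono: "mono_on {0..} F" using assms(2) by (simp add: Delta_plus_def)
  have rcF: "\<And>t. t \<ge> 0 \<Longrightarrow> continuous (at_right t) F" using assms(2) by (simp add: Delta_plus_def)
  have F1: "(F \<longlongrightarrow> 1) at_top" using assms(2) by (simp add: Delta_plus_def)
  have anti: "g t \<le> g s" if "0 \<le> s" "s \<le> t" for s t
    using mono_onD[OF mono, of s t] that by (simp add: g_def)
  have g0: "(g \<longlongrightarrow> 0) at_top"
    unfolding g_def using tendsto_diff[OF tendsto_const[of 1] F1] by simp
  have rc: "(g \<longlongrightarrow> g t) (at_right t)" if "t \<ge> 0" for t
  proof -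
    have "(F \<longlongrightarrow> F t) (at_right t)" using rcF[OF that] by (simp add: continuous_within)
    then show ?thesis unfolding g_def by (intro tendsto_intros)
  qed
  have gnn: "g t \<ge> 0" if "t \<ge> 0" for t using F01[OF that] by (simp add: g_def)
  have pf: "bool_maxpow F n s = F s / (F s + real n * g s)" if "n \<ge> 1" "s \<ge> 0" for n s
    using pow_formula[OF that(1)] F01[OF that(2)] by (simp add: g_def)
  have Dpos: "D_alpha \<alpha> t = 1 / (1 + t powr (-\<alpha>))" if "t > 0" for t
    using that by (simp add: D_alpha_def)
  show ?thesis
  proof
    assume "bool_max_domain_of_attraction F (D_alpha \<alpha>)"
    then obtain a where apos: "\<And>n. a n > 0"
      and lim: "\<And>t. t \<ge> 0 \<Longrightarrow> (\<lambda>n. bool_maxpow F n (a n * t)) \<longlonglongrightarrow> D_alpha \<alpha> t"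
      unfolding bool_max_domain_of_attraction_def by blast
    have g0pos: "g 0 > 0"
    proof (rule ccontr)
      assume "\<not> g 0 > 0"
      then have "g 0 = 0" using gnn[of 0] by simp
      then have evc: "eventually (\<lambda>n. bool_maxpow F n (a n * 0) = 1) sequentially"
        using F01[of 0] by (intro eventually_sequentiallyI[of 1]) (simp add: pf g_def)
      have "(\<lambda>n. bool_maxpow F n (a n * 0)) \<longlonglongrightarrow> 1"
        using tendsto_cong[OF evc, of 1] by simp
      moreover have "(\<lambda>n. bool_maxpow F n (a n * 0)) \<longlonglongrightarrow> 0"
        using lim[of 0] by (simp add: D_alpha_def)
      ultimately show False using LIMSEQ_unique by fastforce
    qed
    have W: "(\<lambda>n. real n * g (a n * t)) \<longlonglongrightarrow> t powr (-\<alpha>)" if t: "t > 0" for t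
    proof (rule seq_W[where f = "\<lambda>n. F (a n * t)"])
      show "t powr (-\<alpha>) > 0" using t by simp
      show "0 \<le> F (a n * t) \<and> F (a n * t) \<le> 1" for n
        using F01 apos[of n] t by (simp add: less_imp_le)
      show "real n * g (a n * t) = real n * (1 - F (a n * t))" for n by (simp add: g_def)
      have "eventually (\<lambda>n. bool_maxpow F n (a n * t) =
          F (a n * t) / (F (a n * t) + real n * g (a n * t))) sequentially"
        using apos t by (intro eventually_sequentiallyI[of 1] pf) (auto simp: less_imp_le)
      then show "(\<lambda>n. F (a n * t) / (F (a n * t) + real n * g (a n * t))) \<longlonglongrightarrow> 1 / (1 + t powr (-\<alpha>))"
        using lim[of t] t Dpos[OF t] Lim_transform_eventually by fastforce
    qed
    have W1: "(\<lambda>n. real n * g (a n)) \<longlonglongrightarrow> 1" using W[of 1] by simp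
    have ev2: "eventually (\<lambda>n. real n * g (a n) < 2) sequentially"
      using order_tendstoD(2)[OF W1] by simp
    have big: "eventually (\<lambda>n. real n * c > 2) sequentially" if "c > 0" for c
    proof (rule eventually_sequentiallyI[of "nat \<lceil>2 / c\<rceil> + 1"])
      fix n assume n: "nat \<lceil>2 / c\<rceil> + 1 \<le> n"
      have "real n \<ge> real (nat \<lceil>2 / c\<rceil>) + 1" using n by linarith
      moreover have "real (nat \<lceil>2 / c\<rceil>) \<ge> 2 / c" by linarith
      ultimately have "real n > 2 / c" by linarith
      then show "real n * c > 2" using that by (simp add: field_simps)
    qed
    have gpos: "g s > 0" if s: "s \<ge> 0" for s
    proof (rule ccontr)
      assume "\<not> g s > 0"
      then have gz: "g y = 0" if "y \<ge> s" for y
        using anti[of s y] gnn[of y] s that by force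
      have "eventually (\<lambda>y. g y > g 0 / 2) (at_right 0)"
        using order_tendstoD(1)[OF rc[of 0], of "g 0 / 2"] g0pos by simp
      then obtain b where b: "b > 0" "\<And>y. y > 0 \<Longrightarrow> y < b \<Longrightarrow> g y > g 0 / 2"
        by (subst (asm) eventually_at_right[of 0 1]) auto
      define d where "d = b / 2"
      have d1: "d > 0" "d < b" using b by (auto simp: d_def)
      have d: "d > 0" "g d > 0" using b(2)[OF d1] g0pos d1 by auto
      define T where "T = s / d + 1"
      have "s / d \<ge> 0" using s d by simp
      then have T: "T > 0" by (simp add: T_def)
      have "eventually (\<lambda>n. real n * g (a n * T) > 0) sequentially"
        using order_tendstoD(1)[OF W[OF T]] T by simp
      then have "eventually (\<lambda>n. real n * g d < 2) sequentially"
        using ev2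
      proof eventually_elim
        case (elim n)
        have "g (a n * T) \<noteq> 0" using elim(1) by auto
        then have "a n * T < s" using gz[of "a n * T"] by linarith
        then have "a n < s / T" using T by (simp add: field_simps)
        also have "s / T \<le> d" using T d s by (simp add: T_def field_simps)
        finally have "g d \<le> g (a n)" using anti apos[of n] by (simp add: less_imp_le)
        then have "real n * g d \<le> real n * g (a n)" by (simp add: mult_left_mono)
        then show ?case using elim(2) by linarith
      qed
      with big[OF d(2)] have "eventually (\<lambda>n. False) sequentially"
        by eventually_elim linarith
      then show False by simp
    qed
    have atop: "filterlim a at_top sequentially"
      unfolding filterlim_at_top
    proof
      fix Z :: real
      define M where "M = max Z 0"
      have gM: "g M > 0" using gpos by (simp add: M_def)
      from big[OF gM] ev2 show "eventually (\<lambda>n. Z \<le> a n) sequentially"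
      proof eventually_elim
        case (elim n)
        have "M \<le> a n"
        proof (rule ccontr)
          assume "\<not> M \<le> a n"
          then have "g M \<le> g (a n)" using anti apos[of n] by (simp add: less_imp_le)
          then have "real n * g M \<le> real n * g (a n)" by (simp add: mult_left_mono)
          then show False using elim by linarith
        qed
        then show ?case by (simp add: M_def)
      qed
    qed
    show "regularly_varying (- \<alpha>) (\<lambda>t. 1 - F t)"
      unfolding regularly_varying_def
    proof (intro allI impI)
      fix x :: real assume x: "x > 0"
      show "((\<lambda>t. (1 - F (t * x)) / (1 - F t)) \<longlongrightarrow> x powr - \<alpha>) at_top"
        using RV_from_seq[of g a \<alpha> x, OF anti gpos g0 apos atop W al x] by (simp add: g_def)
    qed
  next
    assume "regularly_varying (- \<alpha>) (\<lambda>t. 1 - F t)"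
    then have RV: "((\<lambda>s. g (s * x) / g s) \<longlongrightarrow> x powr (-\<alpha>)) at_top" if "x > 0" for x
      using that by (simp add: regularly_varying_def g_def)
    have gpos: "g s > 0" if s: "s \<ge> 0" for s
    proof (rule ccontr)
      assume "\<not> g s > 0"
      then have gz: "g y = 0" if "y \<ge> s" for y
        using anti[of s y] gnn[of y] s that by force
      have evc: "eventually (\<lambda>y. g (y * 2) / g y = 0) at_top"
        using eventually_ge_at_top[of s] by eventually_elim (simp add: gz)
      have "((\<lambda>y. g (y * 2) / g y) \<longlongrightarrow> 0) at_top"
        using tendsto_cong[OF evc, of 0] by simp
      moreover have "((\<lambda>y. g (y * 2) / g y) \<longlongrightarrow> 2 powr (-\<alpha>)) at_top" using RV[of 2] by simp
      ultimately have "2 powr (-\<alpha>) = (0::real)" using tendsto_unique[OF trivial_limit_at_top_linorder] by metis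
      then show False by simp
    qed
    obtain a where apos: "\<And>n. a n > 0" and atop: "filterlim a at_top sequentially"
      and W: "\<And>t. t > 0 \<Longrightarrow> (\<lambda>n. real n * g (a n * t)) \<longlonglongrightarrow> t powr (-\<alpha>)"
      using construct_a[of g \<alpha>, OF anti gpos g0 rc RV al] by blast
    show "bool_max_domain_of_attraction F (D_alpha \<alpha>)"
      unfolding bool_max_domain_of_attraction_def
    proof (rule exI[of _ a], intro conjI allI impI)
      show "a n > 0" for n using apos by blast
      fix t :: real assume t: "t \<ge> 0"
      show "(\<lambda>n. bool_maxpow F n (a n * t)) \<longlonglongrightarrow> D_alpha \<alpha> t"
      proof (cases "t = 0")
        case True
        have ev: "eventually (\<lambda>n. bool_maxpow F n (a n * t) = F 0 / (F 0 + real n * g 0)) sequentially"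
          using True by (intro eventually_sequentiallyI[of 1]) (simp add: pf)
        have g0p: "g 0 > 0" using gpos by simp
        have "(\<lambda>n. F 0 / (F 0 + real n * g 0)) \<longlonglongrightarrow> 0"
        proof (rule tendsto_sandwich[OF _ _ tendsto_const lim_const_over_n[of "1 / g 0"]])
          show "eventually (\<lambda>n. 0 \<le> F 0 / (F 0 + real n * g 0)) sequentially"
            using F01[of 0] g0p by (intro always_eventually allI) simp
          show "eventually (\<lambda>n. F 0 / (F 0 + real n * g 0) \<le> 1 / g 0 / real n) sequentially"
            using eventually_gt_at_top[of 0]
          proof eventually_elim
            case (elim n)
            have p: "real n * g 0 > 0" using elim g0p by simp
            have "F 0 / (F 0 + real n * g 0) \<le> 1 / (real n * g 0)"
              using F01[of 0] p by (intro frac_le) auto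
            then show ?case by (simp add: field_simps)
          qed
        qed
        then have "(\<lambda>n. bool_maxpow F n (a n * t)) \<longlonglongrightarrow> 0"
          using tendsto_cong[OF ev] by simp
        then show ?thesis using True by (simp add: D_alpha_def)
      next
        case False
        then have tp: "t > 0" using t by simp
        have ev: "eventually (\<lambda>n. bool_maxpow F n (a n * t) =
            F (a n * t) / (F (a n * t) + real n * g (a n * t))) sequentially"
          using apos tp by (intro eventually_sequentiallyI[of 1] pf) (auto simp: less_imp_le)
        have at: "filterlim (\<lambda>n. a n * t) at_top sequentially"
          by (rule filterlim_mult_const_top[OF atop tp])
        have Fl: "(\<lambda>n. F (a n * t)) \<longlonglongrightarrow> 1" using filterlim_compose[OF F1 at] .
        have "(\<lambda>n. F (a n * t) / (F (a n * t) + real n * g (a n * t))) \<longlonglongrightarrow> 1 / (1 + t powr (-\<alpha>))"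
          using tp by (intro tendsto_intros Fl W) (auto simp: add_pos_pos, smt (verit) powr_gt_zero)
        then have "(\<lambda>n. bool_maxpow F n (a n * t)) \<longlonglongrightarrow> 1 / (1 + t powr (-\<alpha>))"
          using tendsto_cong[OF ev] by simp
        then show ?thesis using Dpos[OF tp] by simp
      qed
    qed
  qed
qed

end
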